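(* Let $d=2$ and $n\ge3$ odd, i.e. $\alpha=n/2$, and let $\lambda=\pi/2$ (so $\varkappa=\pi/(2n)$). Then $v_1=-w_{(n-1)/2}$ and $u_0=-w_{(n+1)/2}$, and $$\hat P(t)=\frac{R(t)\prod_{j=0}^{n-1}(t-w_j)(t+w_j)}{(t^2+1)^2}$$ is a polynomial in $t$, with coefficients affine-linear in $(x,y)$, of degree exactly $2n-4$ (its coefficient of $t^{2n-4}$ is a non-constant affine function of $x,y$).
   Context: Let $\eta=\frac{\pi}{2}\cdot\frac{n-2}{n}$, so that $\alpha:=\pi/(\pi-2\eta)=n/2$, and $d=2$. Let $\lambda=\pi/2$ and $\varkappa=(\pi-\lambda-\eta)/2=\pi/(2n)$. Let $x,y$ be real. Define $\rho=\dfrac{\sin2\eta}{\sin\varkappa\,\sin(\varkappa+2\eta)}$, $v_k=\cot(\frac{\varkappa}{2}+\frac{\pi k}{2})$, $u_k=\cot(\frac{\varkappa}{2}+\eta+\frac{\pi k}{2})$ ($k=0,1$), $w_j=\cot(\frac{\varkappa}{2}+\frac{\pi j}{n})$ ($j=0,\dots,n-1$), and $$R(t)=x\rho\frac{(t^2+1)^2}{\prod_{k=0}^{1}(t-v_k)(t-u_k)}+y\rho\frac{(t^2+1)^2}{\prod_{k=0}^{1}(t+v_k)(t+u_k)}-2\cot\varkappa\,\frac{(t^2+1)^2}{\prod_{k=0}^{1}(t-v_k)(t+v_k)}+2\alpha\cot(\alpha\varkappa)\,\frac{(t^2+1)^n}{\prod_{j=0}^{n-1}(t-w_j)(t+w_j)}.$$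 For $t=\cot(\phi/2)$, $R(t)$ equals the function $g(\phi)$ whose real double roots $\phi\in(-\varkappa,\varkappa)$ parametrize the arctic curve of the six-vertex model with domain wall boundary conditions. *)

theory Defs
  imports Complex_Main "HOL-Computational_Algebra.Polynomial"
begin

definition eta :: "nat \<Rightarrow> real" where
  "eta n = pi / 2 * ((real n - 2) / real n)"

definition alpha :: "nat \<Rightarrow> real" where
  "alpha n = pi / (pi - 2 * eta n)"

definition lam :: real where
  "lam = pi / 2"

definition kappa :: "nat \<Rightarrow> real" where
  "kappa n = (pi - lam - eta n) / 2"

definition rho :: "nat \<Rightarrow> real" where
  "rho n = sin (2 * eta n) / (sin (kappa n) * sin (kappa n + 2 * eta n))"

definition vv :: "nat \<Rightarrow> nat \<Rightarrow> real" where
  "vv n k = cot (kappa n / 2 + pi * real k / 2)"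

definition uu :: "nat \<Rightarrow> nat \<Rightarrow> real" where
  "uu n k = cot (kappa n / 2 + eta n + pi * real k / 2)"

definition ww :: "nat \<Rightarrow> nat \<Rightarrow> real" where
  "ww n j = cot (kappa n / 2 + pi * real j / real n)"

definition R :: "nat \<Rightarrow> real \<Rightarrow> real \<Rightarrow> real \<Rightarrow> real" where
  "R n x y t =
     x * rho n * (t\<^sup>2 + 1)\<^sup>2 / (\<Prod>k<2. (t - vv n k) * (t - uu n k))
   + y * rho n * (t\<^sup>2 + 1)\<^sup>2 / (\<Prod>k<2. (t + vv n k) * (t + uu n k))
   - 2 * cot (kappa n) * (t\<^sup>2 + 1)\<^sup>2 / (\<Prod>k<2. (t - vv n k) * (t + vv n k))
   + 2 * alpha n * cot (alpha n * kappa n) * (t\<^sup>2 + 1) ^ n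
       / (\<Prod>j<n. (t - ww n j) * (t + ww n j))"

definition Phat :: "nat \<Rightarrow> real \<Rightarrow> real \<Rightarrow> real \<Rightarrow> real" where
  "Phat n x y t = R n x y t * (\<Prod>j<n. (t - ww n j) * (t + ww n j)) / (t\<^sup>2 + 1)\<^sup>2"

end

theory Submission
  imports Defs
begin


lemma cot_pi_minus: "cot (pi - y) = - cot y"
  by (simp add: cot_def)

lemma params:
  assumes "n \<ge> 3"
  shows "eta n = pi/2 - pi / real n" "kappa n = pi / (2 * real n)" "alpha n = real n / 2"
proof -
  have n0: "real n > 0" using assms by simp
  show e: "eta n = pi/2 - pi / real n" unfolding eta_def using n0 by (simp add: field_simps)
  show "kappa n = pi / (2 * real n)" unfolding kappa_def lam_def e using n0 by (simp add: field_simps)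
  show "alpha n = real n / 2" unfolding alpha_def e using n0 by (simp add: field_simps)
qed

lemma wvals:
  assumes "odd n" "n \<ge> 3"
  shows "vv n 0 = ww n 0" "vv n 1 = - ww n ((n - 1) div 2)"
        "uu n 0 = - ww n ((n + 1) div 2)" "uu n 1 = ww n (n - 1)"
proof -
  note p = params[OF assms(2)]
  have n0: "real n > 0" using assms by simp
  obtain m where m: "n = 2*m+1" using assms(1) oddE by blast
  have a: "real ((n - 1) div 2) = (real n - 1)/2" using m by simp
  have b: "real ((n + 1) div 2) = (real n + 1)/2" using m by simp
  have c: "real (n - 1) = real n - 1" using m by simp
  have rn: "real n = 2 * real m + 1" using m by simp
  show "vv n 0 = ww n 0" unfolding vv_def ww_def by simp
  show "vv n 1 = - ww n ((n - 1) div 2)"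
  proof -
    have eq: "kappa n / 2 + pi * real 1 / 2 = pi - (kappa n / 2 + pi * real ((n - 1) div 2) / real n)"
      unfolding p a using n0 by (simp add: field_simps)
    show ?thesis unfolding vv_def ww_def eq by (rule cot_pi_minus)
  qed
  show "uu n 0 = - ww n ((n + 1) div 2)"
  proof -
    have eq: "kappa n / 2 + eta n + pi * real 0 / 2 = pi - (kappa n / 2 + pi * real ((n + 1) div 2) / real n)"
      unfolding p b using n0 by (simp add: field_simps)
    show ?thesis unfolding uu_def ww_def eq by (rule cot_pi_minus)
  qed
  show "uu n 1 = ww n (n - 1)"
  proof -
    have eq: "kappa n / 2 + eta n + pi * real 1 / 2 = kappa n / 2 + pi * real (n - 1) / real n"
      unfolding p c using n0 by (simp add: field_simps)
    show ?thesis unfolding uu_def ww_def eq ..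
  qed
qed

lemma rho_nz:
  assumes "n \<ge> 3" shows "rho n \<noteq> 0"
proof -
  note p = params[OF assms]
  have n0: "real n \<ge> 3" using assms by simp
  have "pi / real n < pi / 2" using n0 pi_gt_zero by (simp add: field_simps)
  have h1: "sin (2 * eta n) > 0"
    by (rule sin_gt_zero) (use n0 pi_gt_zero in \<open>auto simp: p field_simps\<close>)
  have h2: "sin (kappa n) > 0"
    by (rule sin_gt_zero) (use n0 pi_gt_zero in \<open>auto simp: p field_simps\<close>)
  have h3: "sin (kappa n + 2 * eta n) > 0"
    by (rule sin_gt_zero) (use n0 pi_gt_zero in \<open>auto simp: p field_simps\<close>)
  show ?thesis unfolding rho_def using h1 h2 h3 by simp
qed

definition Lm :: "nat \<Rightarrow> nat set \<Rightarrow> real poly" where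
  "Lm n S = (\<Prod>j\<in>{..<n}-S. [:- ww n j, 1:])"
definition Lp :: "nat \<Rightarrow> nat set \<Rightarrow> real poly" where
  "Lp n S = (\<Prod>j\<in>{..<n}-S. [: ww n j, 1:])"

lemma split_m:
  assumes "S \<subseteq> {..<n}"
  shows "(\<Prod>j<n. (t - ww n j)) = (\<Prod>j\<in>S. (t - ww n j)) * poly (Lm n S) t"
proof -
  have f: "(\<lambda>j. poly [:- ww n j, 1:] t) = (\<lambda>j. t - ww n j)" by auto
  show ?thesis unfolding Lm_def poly_prod f
    using prod.subset_diff[OF assms finite_lessThan, of "\<lambda>j. t - ww n j"] by (simp add: mult.commute)
qed

lemma split_p:
  assumes "S \<subseteq> {..<n}"
  shows "(\<Prod>j<n. (t + ww n j)) = (\<Prod>j\<in>S. (t + ww n j)) * poly (Lp n S) t"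
proof -
  have f: "(\<lambda>j. poly [: ww n j, 1:] t) = (\<lambda>j. t + ww n j)" by auto
  show ?thesis unfolding Lp_def poly_prod f
    using prod.subset_diff[OF assms finite_lessThan, of "\<lambda>j. t + ww n j"] by (simp add: mult.commute)
qed

lemma deg_m:
  assumes "S \<subseteq> {..<n}"
  shows "degree (Lm n S) = n - card S" "lead_coeff (Lm n S) = 1"
proof -
  have "degree (Lm n S) = (\<Sum>j\<in>{..<n}-S. degree [:- ww n j, 1:])"
    unfolding Lm_def by (rule degree_prod_eq_sum_degree) auto
  also have "\<dots> = card ({..<n} - S)" by simp
  also have "\<dots> = n - card S" using assms by (simp add: card_Diff_subset finite_subset)
  finally show "degree (Lm n S) = n - card S" .
  show "lead_coeff (Lm n S) = 1" unfolding Lm_def lead_coeff_prod by simp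
qed

lemma deg_p:
  assumes "S \<subseteq> {..<n}"
  shows "degree (Lp n S) = n - card S" "lead_coeff (Lp n S) = 1"
proof -
  have "degree (Lp n S) = (\<Sum>j\<in>{..<n}-S. degree [: ww n j, 1:])"
    unfolding Lp_def by (rule degree_prod_eq_sum_degree) auto
  also have "\<dots> = card ({..<n} - S)" by simp
  also have "\<dots> = n - card S" using assms by (simp add: card_Diff_subset finite_subset)
  finally show "degree (Lp n S) = n - card S" .
  show "lead_coeff (Lp n S) = 1" unfolding Lp_def lead_coeff_prod by simp
qed

lemma deg_P:
  assumes "S \<subseteq> {..<n}" "T \<subseteq> {..<n}" "card S = 2" "card T = 2"
  shows "degree (Lm n S * Lp n T) = 2 * n - 4" "coeff (Lm n S * Lp n T) (2 * n - 4) = 1"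
proof -
  have nz: "Lm n S \<noteq> 0" "Lp n T \<noteq> 0" using deg_m(2)[OF assms(1)] deg_p(2)[OF assms(2)] by auto
  have "card S \<le> n" using card_mono[of "{..<n}" S] assms(1) by simp
  have "degree (Lm n S * Lp n T) = (n - card S) + (n - card T)"
    unfolding degree_mult_eq[OF nz] deg_m(1)[OF assms(1)] deg_p(1)[OF assms(2)] ..
  hence d: "degree (Lm n S * Lp n T) = 2 * n - 4"
    using assms(3,4) \<open>card S \<le> n\<close> by linarith
  thus "degree (Lm n S * Lp n T) = 2 * n - 4" .
  show "coeff (Lm n S * Lp n T) (2 * n - 4) = 1"
    using lead_coeff_mult[of "Lm n S" "Lp n T"] deg_m(2)[OF assms(1)] deg_p(2)[OF assms(2)] unfolding d by simp
qed

lemma term_id: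
  fixes c S D Q P :: real
  assumes "D \<noteq> 0" "S \<noteq> 0" "Q = D * P"
  shows "c * S / D * Q / S = c * P"
  using assms by (simp add: field_simps)

lemma sum4: "((a::real) + b - c + d) * Q / S = a * Q / S + b * Q / S - c * Q / S + d * Q / S"
  by (simp add: add_divide_distrib diff_divide_distrib distrib_right left_diff_distrib)



theorem proposition2:
  fixes n :: nat
  assumes "odd n" and "n \<ge> 3"
  shows "vv n 1 = - ww n ((n - 1) div 2)
       \<and> uu n 0 = - ww n ((n + 1) div 2)
       \<and> (\<exists>p0 p1 p2 :: real poly.
            (\<forall>x y t. (\<forall>k<2. t \<noteq> vv n k \<and> t \<noteq> - vv n k \<and> t \<noteq> uu n k \<and> t \<noteq> - uu n k)
                    \<and> (\<forall>j<n. t \<noteq> ww n j \<and> t \<noteq> - ww n j)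
                    \<longrightarrow> Phat n x y t = poly (p0 + smult x p1 + smult y p2) t)
          \<and> degree p0 \<le> 2 * n - 4 \<and> degree p1 \<le> 2 * n - 4 \<and> degree p2 \<le> 2 * n - 4
          \<and> (coeff p1 (2 * n - 4) \<noteq> 0 \<or> coeff p2 (2 * n - 4) \<noteq> 0))"
proof -
  note wv = wvals[OF assms]
  define a where "a = (n - 1) div 2"
  define b where "b = (n + 1) div 2"
  define e where "e = n - 1"
  obtain m where m: "n = 2*m+1" using assms(1) oddE by blast
  have m1: "m \<ge> 1" using m assms(2) by simp
  have am: "a = m" "b = m + 1" "e = 2 * m" unfolding a_def b_def e_def using m by auto
  have S1: "{0, e} \<subseteq> {..<n}" "card {0, e} = 2" using am m m1 by auto
  have S2: "{a, b} \<subseteq> {..<n}" "card {a, b} = 2" using am m m1 by auto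
  have S3: "{0, a} \<subseteq> {..<n}" "card {0, a} = 2" using am m m1 by auto
  define P1 where "P1 = Lm n {0, e} * Lp n {a, b}"
  define P2 where "P2 = Lm n {a, b} * Lp n {0, e}"
  define P3 where "P3 = Lm n {0, a} * Lp n {0, a}"
  define K where "K = 2 * alpha n * cot (alpha n * kappa n)"
  define q where "q = [:1, 0, 1 :: real:]"
  define p0 where "p0 = smult K (q ^ (n - 2)) - smult (2 * cot (kappa n)) P3"
  define p1 where "p1 = smult (rho n) P1"
  define p2 where "p2 = smult (rho n) P2"
  have dP1: "degree P1 = 2 * n - 4" "coeff P1 (2 * n - 4) = 1"
    unfolding P1_def using deg_P[OF S1(1) S2(1) S1(2) S2(2)] by auto
  have dP2: "degree P2 = 2 * n - 4" "coeff P2 (2 * n - 4) = 1"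
    unfolding P2_def using deg_P[OF S2(1) S1(1) S2(2) S1(2)] by auto
  have dP3: "degree P3 = 2 * n - 4"
    unfolding P3_def using deg_P[OF S3(1) S3(1) S3(2) S3(2)] by auto
  have dq: "degree (q ^ (n - 2)) \<le> 2 * n - 4"
  proof -
    have "degree (q ^ (n - 2)) \<le> degree q * (n - 2)" by (rule degree_power_le)
    also have "\<dots> = 2 * n - 4" unfolding q_def by simp
    finally show ?thesis .
  qed
  have deg0: "degree p0 \<le> 2 * n - 4" unfolding p0_def
  proof (rule degree_diff_le)
    show "degree (smult K (q ^ (n - 2))) \<le> 2 * n - 4"
      using degree_smult_le[of K "q ^ (n - 2)"] dq by linarith
    show "degree (smult (2 * cot (kappa n)) P3) \<le> 2 * n - 4"
      using degree_smult_le[of "2 * cot (kappa n)" P3] dP3 by linarith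
  qed
  have deg1: "degree p1 \<le> 2 * n - 4" unfolding p1_def using dP1 degree_smult_le[of "rho n" P1] by linarith
  have deg2: "degree p2 \<le> 2 * n - 4" unfolding p2_def using dP2 degree_smult_le[of "rho n" P2] by linarith
  have c1: "coeff p1 (2 * n - 4) \<noteq> 0" unfolding p1_def using dP1 rho_nz[OF assms(2)] by simp
  have ev: "Phat n x y t = poly (p0 + smult x p1 + smult y p2) t"
    if H1: "\<forall>k<2. t \<noteq> vv n k \<and> t \<noteq> - vv n k \<and> t \<noteq> uu n k \<and> t \<noteq> - uu n k"
    and H2: "\<forall>j<n. t \<noteq> ww n j \<and> t \<noteq> - ww n j" for x y t
  proof -
    have Hj: "t \<noteq> ww n j \<and> t + ww n j \<noteq> 0" if "j < n" for j
    proof -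
      have "t \<noteq> ww n j" "t \<noteq> - ww n j" using H2 that by auto
      thus ?thesis by linarith
    qed
    have lt: "0 < n" "a < n" "b < n" "e < n" using am m m1 by auto
    have h0: "t \<noteq> ww n 0" "t + ww n 0 \<noteq> 0" using Hj[OF lt(1)] by auto
    have ha: "t \<noteq> ww n a" "t + ww n a \<noteq> 0" using Hj[OF lt(2)] by auto
    have hb: "t \<noteq> ww n b" "t + ww n b \<noteq> 0" using Hj[OF lt(3)] by auto
    have he: "t \<noteq> ww n e" "t + ww n e \<noteq> 0" using Hj[OF lt(4)] by auto
    have ne: "0 \<noteq> e" "a \<noteq> b" "0 \<noteq> a" using am m1 by auto
    define Qm where "Qm = (\<Prod>j<n. (t - ww n j))"
    define Qp where "Qp = (\<Prod>j<n. (t + ww n j))"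
    have Q: "(\<Prod>j<n. (t - ww n j) * (t + ww n j)) = Qm * Qp"
      unfolding Qm_def Qp_def by (rule prod.distrib)
    have Qm1: "Qm = (t - ww n 0) * (t - ww n e) * poly (Lm n {0, e}) t"
      unfolding Qm_def split_m[OF S1(1)] using ne by simp
    have Qp1: "Qp = (t + ww n a) * (t + ww n b) * poly (Lp n {a, b}) t"
      unfolding Qp_def split_p[OF S2(1)] using ne by simp
    have Qm2: "Qm = (t - ww n a) * (t - ww n b) * poly (Lm n {a, b}) t"
      unfolding Qm_def split_m[OF S2(1)] using ne by simp
    have Qp2: "Qp = (t + ww n 0) * (t + ww n e) * poly (Lp n {0, e}) t"
      unfolding Qp_def split_p[OF S1(1)] using ne by simp
    have Qm3: "Qm = (t - ww n 0) * (t - ww n a) * poly (Lm n {0, a}) t"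
      unfolding Qm_def split_m[OF S3(1)] using ne by simp
    have Qp3: "Qp = (t + ww n 0) * (t + ww n a) * poly (Lp n {0, a}) t"
      unfolding Qp_def split_p[OF S3(1)] using ne by simp
    have wv': "vv n 0 = ww n 0" "vv n 1 = - ww n a" "uu n 0 = - ww n b" "uu n 1 = ww n e"
      using wv unfolding a_def b_def e_def by auto
    have wv'': "vv n (Suc 0) = - ww n a" "uu n (Suc 0) = ww n e" using wv' by simp_all
    have D1: "(\<Prod>k<2. (t - vv n k) * (t - uu n k)) = (t - ww n 0) * (t + ww n b) * ((t + ww n a) * (t - ww n e))"
      by (simp add: numeral_2_eq_2 wv' wv'')
    have D2: "(\<Prod>k<2. (t + vv n k) * (t + uu n k)) = (t + ww n 0) * (t - ww n b) * ((t - ww n a) * (t + ww n e))"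
      by (simp add: numeral_2_eq_2 wv' wv'')
    have D3: "(\<Prod>k<2. (t - vv n k) * (t + vv n k)) = (t - ww n 0) * (t + ww n 0) * ((t + ww n a) * (t - ww n a))"
      by (simp add: numeral_2_eq_2 wv' wv'')
    have nzD1: "(\<Prod>k<2. (t - vv n k) * (t - uu n k)) \<noteq> 0" unfolding D1 using h0 ha hb he by simp
    have nzD2: "(\<Prod>k<2. (t + vv n k) * (t + uu n k)) \<noteq> 0" unfolding D2 using h0 ha hb he by simp
    have nzD3: "(\<Prod>k<2. (t - vv n k) * (t + vv n k)) \<noteq> 0" unfolding D3 using h0 ha hb he by simp
    have nzQ: "(\<Prod>j<n. (t - ww n j) * (t + ww n j)) \<noteq> 0"
    proof -
      have "\<forall>j\<in>{..<n}. (t - ww n j) * (t + ww n j) \<noteq> 0" using H2 by force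
      thus ?thesis by simp
    qed
    have "t\<^sup>2 + 1 > (0::real)" by (simp add: add_nonneg_pos)
    hence S0: "(t\<^sup>2 + 1)\<^sup>2 \<noteq> (0::real)" by simp
    have E1: "(\<Prod>j<n. (t - ww n j) * (t + ww n j)) = (\<Prod>k<2. (t - vv n k) * (t - uu n k)) * poly P1 t"
      unfolding Q Qm1 Qp1 D1 P1_def by simp
    have E2: "(\<Prod>j<n. (t - ww n j) * (t + ww n j)) = (\<Prod>k<2. (t + vv n k) * (t + uu n k)) * poly P2 t"
      unfolding Q Qm2 Qp2 D2 P2_def by simp
    have E3: "(\<Prod>j<n. (t - ww n j) * (t + ww n j)) = (\<Prod>k<2. (t - vv n k) * (t + vv n k)) * poly P3 t"
      unfolding Q Qm3 Qp3 D3 P3_def by simp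
    have T4: "K * (t\<^sup>2 + 1) ^ n / (\<Prod>j<n. (t - ww n j) * (t + ww n j)) * (\<Prod>j<n. (t - ww n j) * (t + ww n j)) / (t\<^sup>2 + 1)\<^sup>2
       = K * (t\<^sup>2 + 1) ^ (n - 2)"
    proof -
      have "(t\<^sup>2 + 1) ^ n = (t\<^sup>2 + 1)\<^sup>2 * (t\<^sup>2 + 1) ^ (n - 2)"
      proof -
        have nn: "n = 2 + (n - 2)" using assms(2) by simp
        show ?thesis by (metis nn power_add)
      qed
      thus ?thesis using nzQ S0 by simp
    qed
    have pq1: "poly q t = t\<^sup>2 + 1" unfolding q_def by (simp add: power2_eq_square)
    have pq: "poly (q ^ (n - 2)) t = (t\<^sup>2 + 1) ^ (n - 2)"
      unfolding q_def poly_power by (simp add: power2_eq_square add.commute)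
    show ?thesis
      unfolding Phat_def R_def sum4
      term_id[OF nzD1 S0 E1] term_id[OF nzD2 S0 E2] term_id[OF nzD3 S0 E3] K_def[symmetric] T4
      unfolding p0_def p1_def p2_def by (simp add: pq pq1 algebra_simps)
  qed
  show ?thesis using wv deg0 deg1 deg2 c1 ev by blast
qed

end
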